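(* Let $\mathcal L>0$, $m_\pm>0$, $\rho_\pm>0$, $S_+<0<S_-$, $S_I\in\mathbb R$, $\lambda_\pm=\sqrt{\rho_\pm/m_\pm}$, and define \[ \mathcal H_1^{\rm p}(q_1,q_2)=\tfrac12\Big(-\tfrac{S_+}{\rho_+}m_+\lambda_+\tanh\big(\lambda_+\tfrac{q_2-q_1}{2}\big)-\tfrac{S_-}{\rho_-}m_-\lambda_-\tanh(\lambda_-q_1)-S_I\Big), \] \[ \mathcal H_2^{\rm p}(q_1,q_2)=\tfrac12\Big(\tfrac{S_+}{\rho_+}m_+\lambda_+\tanh\big(\lambda_+\tfrac{q_2-q_1}{2}\big)+\tfrac{S_-}{\rho_-}m_-\lambda_-\tanh(\lambda_-(\mathcal L-q_2))+S_I\Big). \] Then the ODE system $\dot q_1=\mathcal H_1^{\rm p}(q_1,q_2)$, $\dot q_2=\mathcal H_2^{\rm p}(q_1,q_2)$ is the gradient flow of the function \[ \mathcal E(q_1,q_2)=\frac{\frac{S_-}{\rho_-}m_-}{2}\ln\cosh(\lambda_-q_1)+\frac{\frac{S_-}{\rho_-}m_-}{2}\ln\cosh(\lambda_-(\mathcal L-q_2))-\frac{S_+}{\rho_+}m_+\ln\cosh\Big(\lambda_+\frac{q_2-q_1}{2}\Big)+\frac12S_I(q_1-q_2), \] i.e. $(\mathcal H_1^{\rm p},\mathcal H_2^{\rm p})=-\nabla\mathcal E$, and $\mathcal E$ is a strictly convex Lyapunov function for the system. *)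

theory Defs
  imports "HOL-Analysis.Analysis"
begin

definition strict_convex_on :: "'a::real_vector set \<Rightarrow> ('a \<Rightarrow> real) \<Rightarrow> bool"
  where "strict_convex_on S f \<longleftrightarrow> convex S \<and>
    (\<forall>x\<in>S. \<forall>y\<in>S. x \<noteq> y \<longrightarrow> (\<forall>u>0. \<forall>v>0. u + v = 1 \<longrightarrow>
        f (u *\<^sub>R x + v *\<^sub>R y) < u * f x + v * f y))"

definition lam :: "real \<Rightarrow> real \<Rightarrow> real" where
  "lam rho m = sqrt (rho / m)"

definition H1p :: "real \<Rightarrow> real \<Rightarrow> real \<Rightarrow> real \<Rightarrow> real \<Rightarrow> real \<Rightarrow> real \<Rightarrow> real \<Rightarrow> real \<Rightarrow> real \<Rightarrow> real"
  where "H1p L mp mm rhop rhom Sp Sm SI q1 q2 =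
    (1/2) * ( - (Sp / rhop) * mp * lam rhop mp * tanh (lam rhop mp * ((q2 - q1) / 2))
              - (Sm / rhom) * mm * lam rhom mm * tanh (lam rhom mm * q1)
              - SI)"

definition H2p :: "real \<Rightarrow> real \<Rightarrow> real \<Rightarrow> real \<Rightarrow> real \<Rightarrow> real \<Rightarrow> real \<Rightarrow> real \<Rightarrow> real \<Rightarrow> real \<Rightarrow> real"
  where "H2p L mp mm rhop rhom Sp Sm SI q1 q2 =
    (1/2) * ( (Sp / rhop) * mp * lam rhop mp * tanh (lam rhop mp * ((q2 - q1) / 2))
              + (Sm / rhom) * mm * lam rhom mm * tanh (lam rhom mm * (L - q2))
              + SI)"

definition Efun :: "real \<Rightarrow> real \<Rightarrow> real \<Rightarrow> real \<Rightarrow> real \<Rightarrow> real \<Rightarrow> real \<Rightarrow> real \<Rightarrow> real \<times> real \<Rightarrow> real"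
  where "Efun L mp mm rhop rhom Sp Sm SI q =
    ((Sm / rhom) * mm / 2) * ln (cosh (lam rhom mm * fst q))
    + ((Sm / rhom) * mm / 2) * ln (cosh (lam rhom mm * (L - snd q)))
    - (Sp / rhop) * mp * ln (cosh (lam rhop mp * ((snd q - fst q) / 2)))
    + (1/2) * SI * (fst q - snd q)"

end

theory Submission
  imports Defs
begin


lemma lncosh_deriv: "((\<lambda>x::real. ln (cosh x)) has_real_derivative tanh x) (at x)"
proof -
  have "cosh x > 0" by (simp add: cosh_real_pos)
  then show ?thesis
    by (auto intro!: derivative_eq_intros simp: tanh_def)
qed

lemma lncosh_strict_lt:
  fixes a b u v :: real
  assumes ab: "a < b" and u: "0 < u" and v: "0 < v" and uv: "u + v = 1"
  shows "ln (cosh (u * a + v * b)) < u * ln (cosh a) + v * ln (cosh b)"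
proof -
  define z where "z = u * a + v * b"
  have ue: "u = 1 - v" using uv by simp
  have za: "z - a = v * (b - a)" unfolding z_def ue by (simp add: algebra_simps)
  have bz: "b - z = u * (b - a)" unfolding z_def ue by (simp add: algebra_simps)
  have "v * (b - a) > 0" using v ab by simp
  then have az: "a < z" using za by linarith
  have zb: "z < b" using bz u ab by (smt (verit) mult_pos_pos)
  obtain x1 where x1: "a < x1" "x1 < z" "ln (cosh z) - ln (cosh a) = (z - a) * tanh x1"
    using MVT2[OF az, of "\<lambda>x. ln (cosh x)" tanh] lncosh_deriv by blast
  obtain x2 where x2: "z < x2" "x2 < b" "ln (cosh b) - ln (cosh z) = (b - z) * tanh x2"
    using MVT2[OF zb, of "\<lambda>x. ln (cosh x)" tanh] lncosh_deriv by blast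
  have t: "tanh x1 < tanh x2" using x1 x2 by simp
  have "u * ln (cosh a) + v * ln (cosh b) - ln (cosh z)
      = v * (ln (cosh b) - ln (cosh z)) - u * (ln (cosh z) - ln (cosh a))"
    using uv by (simp add: algebra_simps) (metis add_diff_cancel_left' distrib_right mult_1 uv)
  also have "\<dots> = v * ((b - z) * tanh x2) - u * ((z - a) * tanh x1)"
    by (simp only: x1(3) x2(3))
  also have "\<dots> = v * ((u * (b - a)) * tanh x2) - u * ((v * (b - a)) * tanh x1)"
    by (simp only: za bz)
  also have "\<dots> = (u * v * (b - a)) * (tanh x2 - tanh x1)"
    by (simp add: algebra_simps)
  also have "\<dots> > 0" using u v ab t by simp
  finally show ?thesis unfolding z_def by simp
qed

lemma lncosh_conv:
  fixes a b u v :: real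
  assumes u: "0 < u" and v: "0 < v" and uv: "u + v = 1"
  shows "ln (cosh (u * a + v * b)) \<le> u * ln (cosh a) + v * ln (cosh b)"
    and "a \<noteq> b \<Longrightarrow> ln (cosh (u * a + v * b)) < u * ln (cosh a) + v * ln (cosh b)"
proof -
  show s: "a \<noteq> b \<Longrightarrow> ln (cosh (u * a + v * b)) < u * ln (cosh a) + v * ln (cosh b)"
  proof -
    assume "a \<noteq> b"
    then consider "a < b" | "b < a" by linarith
    then show ?thesis
    proof cases
      case 1 then show ?thesis using lncosh_strict_lt[OF 1 u v uv] by simp
    next
      case 2 then show ?thesis using lncosh_strict_lt[OF 2 v u] uv by (simp add: add.commute)
    qed
  qed
  show "ln (cosh (u * a + v * b)) \<le> u * ln (cosh a) + v * ln (cosh b)"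
  proof (cases "a = b")
    case True then show ?thesis using uv by (simp add: distrib_right[symmetric])
  next
    case False then show ?thesis using s by simp
  qed
qed

lemma lnc_comp:
  fixes f :: "'a::real_normed_vector \<Rightarrow> real"
  assumes "(f has_derivative f') (at x)"
  shows "((\<lambda>q. ln (cosh (f q))) has_derivative (\<lambda>h. tanh (f x) * f' h)) (at x)"
proof -
  have "((\<lambda>y::real. ln (cosh y)) has_derivative (\<lambda>h. tanh (f x) * h)) (at (f x))"
    using lncosh_deriv[of "f x"] by (simp add: has_field_derivative_def)
  from has_derivative_compose[OF assms this] show ?thesis by simp
qed

lemma deriv_part:
  assumes "rhop \<noteq> 0" "rhom \<noteq> 0"
  shows "(Efun L mp mm rhop rhom Sp Sm SI has_derivative
        (\<lambda>h. - ((H1p L mp mm rhop rhom Sp Sm SI q1 q2, H2p L mp mm rhop rhom Sp Sm SI q1 q2) \<bullet> h)))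
        (at (q1, q2))"
proof -
  define lm where "lm = lam rhom mm"
  define lp where "lp = lam rhop mp"
  have d1: "((\<lambda>q::real\<times>real. ln (cosh (lm * fst q))) has_derivative (\<lambda>h. tanh (lm * q1) * (lm * fst h))) (at (q1,q2))"
    using lnc_comp[of "\<lambda>q::real\<times>real. lm * fst q" "\<lambda>h. lm * fst h" "(q1,q2)"]
    by (simp add: has_derivative_mult_right has_derivative_fst)
  have ld2: "((\<lambda>q::real\<times>real. lm * (L - snd q)) has_derivative (\<lambda>h. lm * (- snd h))) (at (q1,q2))"
    by (auto intro!: derivative_eq_intros)
  have d2: "((\<lambda>q::real\<times>real. ln (cosh (lm * (L - snd q)))) has_derivative (\<lambda>h. tanh (lm * (L - q2)) * (lm * (- snd h)))) (at (q1,q2))"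
    using lnc_comp[OF ld2]
    by simp
  have ld3: "((\<lambda>q::real\<times>real. lp * ((snd q - fst q) / 2)) has_derivative (\<lambda>h. lp * ((snd h - fst h) / 2))) (at (q1,q2))"
    by (auto intro!: derivative_eq_intros)
  have d3: "((\<lambda>q::real\<times>real. ln (cosh (lp * ((snd q - fst q) / 2)))) has_derivative (\<lambda>h. tanh (lp * ((q2 - q1) / 2)) * (lp * ((snd h - fst h) / 2)))) (at (q1,q2))"
    using lnc_comp[OF ld3]
    by simp
  have d4: "((\<lambda>q::real\<times>real. (1/2) * SI * (fst q - snd q)) has_derivative (\<lambda>h. (1/2) * SI * (fst h - snd h))) (at (q1,q2))"
    by (auto intro!: derivative_eq_intros)
  have D: "(Efun L mp mm rhop rhom Sp Sm SI has_derivative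
     (\<lambda>h. ((Sm / rhom) * mm / 2) * (tanh (lm * q1) * (lm * fst h))
        + ((Sm / rhom) * mm / 2) * (tanh (lm * (L - q2)) * (lm * (- snd h)))
        - (Sp / rhop) * mp * (tanh (lp * ((q2 - q1) / 2)) * (lp * ((snd h - fst h) / 2)))
        + (1/2) * SI * (fst h - snd h))) (at (q1,q2))"
    unfolding Efun_def[abs_def] lm_def[symmetric] lp_def[symmetric]
    by (intro has_derivative_add has_derivative_diff has_derivative_mult_right d1 d2 d3 d4)
  show ?thesis
    apply (rule has_derivative_eq_rhs[OF D])
    apply (rule ext)
    apply (simp add: H1p_def H2p_def inner_prod_def lm_def[symmetric] lp_def[symmetric])
    using assms apply (simp add: field_simps)
    done
qed

lemma convex_part:
  fixes L mp mm rhop rhom Sp Sm SI :: real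
  assumes "mp > 0" "mm > 0" "rhop > 0" "rhom > 0" "Sp < 0" "0 < Sm"
  shows "strict_convex_on UNIV (Efun L mp mm rhop rhom Sp Sm SI)"
  unfolding strict_convex_on_def
proof (intro conjI convex_UNIV ballI impI allI)
  fix x y :: "real \<times> real" and u v :: real
  assume xy: "x \<noteq> y" and u: "0 < u" and v: "0 < v" and uv: "u + v = 1"
  obtain x1 x2 where x: "x = (x1, x2)" by fastforce
  obtain y1 y2 where y: "y = (y1, y2)" by fastforce
  define lm where "lm = lam rhom mm"
  define lp where "lp = lam rhop mp"
  have lm: "lm > 0" unfolding lm_def lam_def using assms by simp
  have lp: "lp > 0" unfolding lp_def lam_def using assms by simp
  define A where "A = (Sm / rhom) * mm / 2"
  define B where "B = - (Sp / rhop) * mp"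
  have A: "A > 0" unfolding A_def using assms by simp
  have B: "B > 0" unfolding B_def using assms by (simp add: divide_neg_pos mult_neg_pos)
  define D1 where "D1 = u * ln (cosh (lm * x1)) + v * ln (cosh (lm * y1)) - ln (cosh (u * (lm * x1) + v * (lm * y1)))"
  define D2 where "D2 = u * ln (cosh (lm * (L - x2))) + v * ln (cosh (lm * (L - y2))) - ln (cosh (u * (lm * (L - x2)) + v * (lm * (L - y2))))"
  define D3 where "D3 = u * ln (cosh (lp * ((x2 - x1) / 2))) + v * ln (cosh (lp * ((y2 - y1) / 2))) - ln (cosh (u * (lp * ((x2 - x1) / 2)) + v * (lp * ((y2 - y1) / 2))))"
  have e1: "lm * (u * x1 + v * y1) = u * (lm * x1) + v * (lm * y1)" by (simp add: algebra_simps)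
  have e2: "lm * (L - (u * x2 + v * y2)) = u * (lm * (L - x2)) + v * (lm * (L - y2))"
    using uv by (simp add: algebra_simps) (metis distrib_left mult.commute mult_1)
  have e3: "lp * ((u * x2 + v * y2 - (u * x1 + v * y1)) / 2) = u * (lp * ((x2 - x1) / 2)) + v * (lp * ((y2 - y1) / 2))"
    by (simp add: field_simps)
  have e4: "(1/2) * SI * (u * x1 + v * y1 - (u * x2 + v * y2)) = u * ((1/2) * SI * (x1 - x2)) + v * ((1/2) * SI * (y1 - y2))"
    by (simp add: field_simps)
  have eq: "u * Efun L mp mm rhop rhom Sp Sm SI x + v * Efun L mp mm rhop rhom Sp Sm SI y
      - Efun L mp mm rhop rhom Sp Sm SI (u *\<^sub>R x + v *\<^sub>R y) = A * D1 + A * D2 + B * D3"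
    unfolding Efun_def x y A_def[symmetric] lm_def[symmetric] lp_def[symmetric]
    apply (simp only: fst_conv snd_conv scaleR_Pair add_Pair real_scaleR_def e1 e2 e3 e4)
    apply (simp add: D1_def D2_def D3_def B_def algebra_simps)
    done
  have D1: "D1 \<ge> 0" unfolding D1_def using lncosh_conv(1)[OF u v uv, of "lm * x1" "lm * y1"] by simp
  have D2: "D2 \<ge> 0" unfolding D2_def using lncosh_conv(1)[OF u v uv, of "lm * (L - x2)" "lm * (L - y2)"] by simp
  have D3: "D3 \<ge> 0" unfolding D3_def using lncosh_conv(1)[OF u v uv, of "lp * ((x2 - x1) / 2)" "lp * ((y2 - y1) / 2)"] by simp
  have "A * D1 + A * D2 + B * D3 > 0"
  proof (cases "x1 = y1")
    case True
    then have "x2 \<noteq> y2" using xy x y by simp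
    then have "lm * (L - x2) \<noteq> lm * (L - y2)" using lm by simp
    then have "D2 > 0" unfolding D2_def using lncosh_conv(2)[OF u v uv, of "lm * (L - x2)" "lm * (L - y2)"] by simp
    then show ?thesis using A B D1 D3 by (simp add: add_nonneg_pos add_pos_nonneg)
  next
    case False
    then have "lm * x1 \<noteq> lm * y1" using lm by simp
    then have "D1 > 0" unfolding D1_def using lncosh_conv(2)[OF u v uv, of "lm * x1" "lm * y1"] by simp
    then show ?thesis using A B D2 D3 by (simp add: add_nonneg_pos add_pos_nonneg)
  qed
  then show "Efun L mp mm rhop rhom Sp Sm SI (u *\<^sub>R x + v *\<^sub>R y)
      < u * Efun L mp mm rhop rhom Sp Sm SI x + v * Efun L mp mm rhop rhom Sp Sm SI y"
    using eq by linarith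
qed

lemma lyap_part:
  fixes E :: "real \<times> real \<Rightarrow> real" and G :: "real \<times> real \<Rightarrow> real \<times> real"
  assumes dE: "\<And>p. (E has_derivative (\<lambda>h. - (G p \<bullet> h))) (at p)"
    and T: "is_interval T"
    and dq: "\<forall>t\<in>T. (q has_vector_derivative G (q t)) (at t within T)"
    and s: "s \<in> T" and t: "t \<in> T" and st: "s \<le> t"
  shows "E (q t) \<le> E (q s)"
proof -
  have sub: "{s..t} \<subseteq> T" using T s t by (meson atLeastAtMost_iff is_interval_1 subsetI)
  have "\<And>x. s \<le> x \<Longrightarrow> x \<le> t \<Longrightarrow>
      ((\<lambda>x. E (q x)) has_derivative (\<lambda>h. - (G (q x) \<bullet> (h *\<^sub>R G (q x))))) (at x within {s..t})"
  proof -
    fix x assume "s \<le> x" "x \<le> t"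
    then have xT: "x \<in> T" using sub by auto
    have "(q has_derivative (\<lambda>h. h *\<^sub>R G (q x))) (at x within {s..t})"
      using dq xT sub has_derivative_subset unfolding has_vector_derivative_def by blast
    from has_derivative_compose[OF this dE] show "((\<lambda>x. E (q x)) has_derivative (\<lambda>h. - (G (q x) \<bullet> (h *\<^sub>R G (q x))))) (at x within {s..t})" .
  qed
  from mvt_very_simple[OF st this] obtain x where
    "E (q t) - E (q s) = - (G (q x) \<bullet> ((t - s) *\<^sub>R G (q x)))" by blast
  also have "\<dots> = - ((t - s) * (G (q x) \<bullet> G (q x)))" by simp
  also have "\<dots> \<le> 0" using st by simp
  finally show ?thesis by simp
qed


theorem proposition4p2:
  fixes L mp mm rhop rhom Sp Sm SI :: real
  assumes "L > 0" "mp > 0" "mm > 0" "rhop > 0" "rhom > 0" "Sp < 0" "0 < Sm"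
  shows
    \<comment> \<open>gradient flow: (H1p, H2p) = - grad E\<close>
    "(\<forall>q1 q2. (Efun L mp mm rhop rhom Sp Sm SI has_derivative
        (\<lambda>h. - ((H1p L mp mm rhop rhom Sp Sm SI q1 q2, H2p L mp mm rhop rhom Sp Sm SI q1 q2) \<bullet> h)))
        (at (q1, q2)))
     \<and> strict_convex_on UNIV (Efun L mp mm rhop rhom Sp Sm SI)
     \<and> (\<forall>(T::real set) (q::real \<Rightarrow> real \<times> real). is_interval T \<longrightarrow>
          (\<forall>t\<in>T. (q has_vector_derivative
              (H1p L mp mm rhop rhom Sp Sm SI (fst (q t)) (snd (q t)),
               H2p L mp mm rhop rhom Sp Sm SI (fst (q t)) (snd (q t)))) (at t within T)) \<longrightarrow>
          (\<forall>s\<in>T. \<forall>t\<in>T. s \<le> t \<longrightarrow>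
              Efun L mp mm rhop rhom Sp Sm SI (q t) \<le> Efun L mp mm rhop rhom Sp Sm SI (q s)))"
proof -
  let ?E = "Efun L mp mm rhop rhom Sp Sm SI"
  let ?G = "\<lambda>p::real\<times>real. (H1p L mp mm rhop rhom Sp Sm SI (fst p) (snd p), H2p L mp mm rhop rhom Sp Sm SI (fst p) (snd p))"
  have d: "\<And>q1 q2. (?E has_derivative
        (\<lambda>h. - ((H1p L mp mm rhop rhom Sp Sm SI q1 q2, H2p L mp mm rhop rhom Sp Sm SI q1 q2) \<bullet> h))) (at (q1, q2))"
    using deriv_part assms by simp
  have dG: "\<And>p. (?E has_derivative (\<lambda>h. - (?G p \<bullet> h))) (at p)"
  proof -
    fix p :: "real \<times> real"
    show "(?E has_derivative (\<lambda>h. - (?G p \<bullet> h))) (at p)"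
      using d[of "fst p" "snd p"] by simp
  qed
  show ?thesis
  proof (intro conjI allI impI ballI)
    fix q1 q2 show "(?E has_derivative
        (\<lambda>h. - ((H1p L mp mm rhop rhom Sp Sm SI q1 q2, H2p L mp mm rhop rhom Sp Sm SI q1 q2) \<bullet> h))) (at (q1, q2))"
      by (rule d)
  next
    show "strict_convex_on UNIV ?E" using convex_part assms by simp
  next
    fix T :: "real set" and q :: "real \<Rightarrow> real \<times> real" and s t
    assume "is_interval T"
      "\<forall>t\<in>T. (q has_vector_derivative
              (H1p L mp mm rhop rhom Sp Sm SI (fst (q t)) (snd (q t)),
               H2p L mp mm rhop rhom Sp Sm SI (fst (q t)) (snd (q t)))) (at t within T)"
      "s \<in> T" "t \<in> T" "s \<le> t"
    then show "?E (q t) \<le> ?E (q s)"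
      using lyap_part[of ?E ?G T q s t, OF dG] by simp
  qed
qed

end
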